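(* Under Assumption 1 and the normalization $p_0=1$, the log-utility of the representative household at the equilibrium $(\bar x,\bar p,\bar y)$ of $\mathcal{E}(\lambda,a)$ is $$V(a,\lambda)=\log u(\bar x_0)=\log(\bar v_0)+\sum_{i\in M}a_{0,i}\log a_{0,i}+a_0^T(I-A)^{-1}u+a_0^T(I-A)^{-1}D\log(\bar v),$$ where $\bar v_0=1+\sum_{i\in M}\varepsilon_i\bar v_i$ is household income, $u_i=\log\lambda_i(a_i)+\sum_{j\in N}a_{i,j}\log a_{i,j}$ and $D=\mathrm{diag}(\sum_{j\in N}a_{i,j}-1)_{i\in M}$.
   Context: Same economy as follows. Household $0$, firms $M=\{1,\dots,m\}$, $N=M\cup\{0\}$ (index 0 also labor, sector 0, $M_0=\{0\}$). Household: one unit of labor, receives all profits, utility $u(x_0)=\prod_{j\in M}x_{0,j}^{a_{0,j}}$, $a_0\ge0$, $\sum a_{0,j}=1$. Firm $i$: requirements $b_i\ge0$, $\sum_\ell b_{i,\ell}\le1$; input shares $a_i\in\mathbb{R}^N_+$ with $\sum_{j\in M_\ell}a_{i,j}=b_{i,\ell}$; production $f_{a,i}(x_i)=\lambda_i(a_i)\prod_{j\in N}x_{i,j}^{a_{i,j}}$; $\varepsilon_i=1-\sum_{j\in N}a_{i,j}$. $A=(a_{i,j})_{i,j\in M}$. General equilibrium: firms maximize profit, household maximizes utility under its budget (labor income plus all profits), all markets clear, labor supply $1$. $\bar v_i=\bar p_i\bar y_i$ denotes equilibrium revenue of firm $i$; $0\log0=0$. Assumption 1: $a_0\in\mathbb{R}^M_{++}$;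 $b_{i,0}>0$ for all $i$; some firm has a positive requirement in some non-labor sector. *)

theory Defs
  imports "HOL-Analysis.Analysis"
begin

text \<open>Firms are indexed by a finite type 'm (the set M); good 0 (labor) is
  treated separately. Cobb-Douglas power with the convention x^0 = 1.\<close>

definition cdp :: "real \<Rightarrow> real \<Rightarrow> real" where
  "cdp x e = (if e = 0 then 1 else x powr e)"

definition xlogx :: "real \<Rightarrow> real" where
  "xlogx x = (if x = 0 then 0 else x * ln x)"

definition prod_fun ::
  "('m::finite \<Rightarrow> real) \<Rightarrow> ('m \<Rightarrow> real) \<Rightarrow> ('m \<Rightarrow> 'm \<Rightarrow> real) \<Rightarrow> 'm \<Rightarrow> real \<Rightarrow> ('m \<Rightarrow> real) \<Rightarrow> real" where
  "prod_fun lam alab A i l z = lam i * cdp l (alab i) * (\<Prod>j\<in>UNIV. cdp (z j) (A i j))"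

definition profit ::
  "('m::finite \<Rightarrow> real) \<Rightarrow> ('m \<Rightarrow> real) \<Rightarrow> ('m \<Rightarrow> 'm \<Rightarrow> real) \<Rightarrow> real \<Rightarrow> ('m \<Rightarrow> real)
     \<Rightarrow> 'm \<Rightarrow> real \<Rightarrow> ('m \<Rightarrow> real) \<Rightarrow> real" where
  "profit lam alab A w p i l z =
     p i * prod_fun lam alab A i l z - w * l - (\<Sum>j\<in>UNIV. p j * z j)"

definition util :: "('m::finite \<Rightarrow> real) \<Rightarrow> ('m \<Rightarrow> real) \<Rightarrow> real" where
  "util a0 x = (\<Prod>j\<in>UNIV. cdp (x j) (a0 j))"

text \<open>Sectoral requirement b_{i,l}: sector 0 = {labor}; sec maps firms/goods in M
  to their (nonzero) sector.\<close>
definition req :: "('m::finite \<Rightarrow> nat) \<Rightarrow> ('m \<Rightarrow> real) \<Rightarrow> ('m \<Rightarrow> 'm \<Rightarrow> real) \<Rightarrow> 'm \<Rightarrow> nat \<Rightarrow> real" where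
  "req sec alab A i s = (if s = 0 then alab i else (\<Sum>j\<in>{j. sec j = s}. A i j))"

text \<open>General equilibrium of the economy E(lam,a): wage w (price of good 0),
  prices p of goods in M, household consumption x0, firm labor inputs lab,
  firm intermediate inputs X i j, outputs y.\<close>
definition equilibrium ::
  "('m::finite \<Rightarrow> real) \<Rightarrow> ('m \<Rightarrow> real) \<Rightarrow> ('m \<Rightarrow> 'm \<Rightarrow> real) \<Rightarrow> ('m \<Rightarrow> real)
    \<Rightarrow> real \<Rightarrow> ('m \<Rightarrow> real) \<Rightarrow> ('m \<Rightarrow> real) \<Rightarrow> ('m \<Rightarrow> real) \<Rightarrow> ('m \<Rightarrow> 'm \<Rightarrow> real) \<Rightarrow> ('m \<Rightarrow> real) \<Rightarrow> bool" where
  "equilibrium lam alab A a0 w p x0 lab X y \<longleftrightarrow>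
     w \<ge> 0 \<and> (\<forall>j. p j \<ge> 0) \<and>
     \<comment> \<open>firms maximize profit\<close>
     (\<forall>i. lab i \<ge> 0 \<and> (\<forall>j. X i j \<ge> 0) \<and>
          y i = prod_fun lam alab A i (lab i) (X i) \<and>
          (\<forall>l z. l \<ge> 0 \<longrightarrow> (\<forall>j. z j \<ge> 0) \<longrightarrow>
               profit lam alab A w p i l z \<le> profit lam alab A w p i (lab i) (X i))) \<and>
     \<comment> \<open>household maximizes utility under its budget (labor income + all profits)\<close>
     (let income = w * 1 + (\<Sum>i\<in>UNIV. profit lam alab A w p i (lab i) (X i)) in
        (\<forall>j. x0 j \<ge> 0) \<and> (\<Sum>j\<in>UNIV. p j * x0 j) \<le> income \<and>
        (\<forall>x. (\<forall>j. x j \<ge> 0) \<longrightarrow> (\<Sum>j\<in>UNIV. p j * x j) \<le> income \<longrightarrow>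
              util a0 x \<le> util a0 x0)) \<and>
     \<comment> \<open>market clearing (goods in M and labor, supply 1)\<close>
     (\<forall>j. y j = x0 j + (\<Sum>i\<in>UNIV. X i j)) \<and>
     (\<Sum>i\<in>UNIV. lab i) = 1"

end

theory Submission imports Defs begin

lemma sum_upd:
  fixes f :: "'a::finite \<Rightarrow> 'b \<Rightarrow> real"
  shows "(\<Sum>k\<in>UNIV. f k ((x(j:=c)) k)) = (\<Sum>k\<in>UNIV. f k (x k)) - f j (x j) + f j c"
proof -
  have "(\<Sum>k\<in>UNIV. f k ((x(j:=c)) k)) = f j c + (\<Sum>k\<in>UNIV-{j}. f k ((x(j:=c)) k))"
    by (simp add: sum.remove[of UNIV j])
  also have "(\<Sum>k\<in>UNIV-{j}. f k ((x(j:=c)) k)) = (\<Sum>k\<in>UNIV-{j}. f k (x k))"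
    by (rule sum.cong) auto
  also have "\<dots> = (\<Sum>k\<in>UNIV. f k (x k)) - f j (x j)"
    by (simp add: sum_diff1)
  finally show ?thesis by simp
qed

lemma prod_upd:
  fixes f :: "'a::finite \<Rightarrow> 'b \<Rightarrow> real"
  shows "(\<Prod>k\<in>UNIV. f k ((x(j:=c)) k)) = f j c * (\<Prod>k\<in>UNIV-{j}. f k (x k))"
    and "(\<Prod>k\<in>UNIV. f k (x k)) = f j (x j) * (\<Prod>k\<in>UNIV-{j}. f k (x k))"
proof -
  have "(\<Prod>k\<in>UNIV. f k ((x(j:=c)) k)) = f j c * (\<Prod>k\<in>UNIV-{j}. f k ((x(j:=c)) k))"
    by (simp add: prod.remove[of UNIV j])
  also have "(\<Prod>k\<in>UNIV-{j}. f k ((x(j:=c)) k)) = (\<Prod>k\<in>UNIV-{j}. f k (x k))"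
    by (rule prod.cong) auto
  finally show "(\<Prod>k\<in>UNIV. f k ((x(j:=c)) k)) = f j c * (\<Prod>k\<in>UNIV-{j}. f k (x k))" .
  show "(\<Prod>k\<in>UNIV. f k (x k)) = f j (x j) * (\<Prod>k\<in>UNIV-{j}. f k (x k))"
    by (simp add: prod.remove[of UNIV j])
qed

lemma cdp_scale: "x > 0 \<Longrightarrow> t > 0 \<Longrightarrow> cdp (t*x) a = t powr a * cdp x a"
  by (simp add: cdp_def powr_mult)

lemma cdp_pos: "x > 0 \<Longrightarrow> cdp x a > 0"
  by (simp add: cdp_def)

lemma cdp_zero: "a > 0 \<Longrightarrow> cdp 0 a = 0"
  by (simp add: cdp_def)

lemma ln_cdp: "x > 0 \<or> a = 0 \<Longrightarrow> ln (cdp x a) = a * ln x"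
  by (auto simp: cdp_def ln_powr)

lemma util_exp:
  assumes "\<forall>j. x j > 0"
  shows "util a0 x = exp (\<Sum>j\<in>UNIV. a0 j * ln (x j))"
proof -
  have "util a0 x = (\<Prod>j\<in>UNIV. exp (a0 j * ln (x j)))"
    unfolding util_def proof (rule prod.cong)
    fix j show "cdp (x j) (a0 j) = exp (a0 j * ln (x j))" using assms[rule_format, of j] by (simp add: cdp_def powr_def)
  qed simp
  then show ?thesis by (simp add: exp_sum)
qed

lemma foc_scale:
  fixes R a c :: real
  assumes "\<And>t. t > 0 \<Longrightarrow> R * t powr a - c * t \<le> R - c"
  shows "R * a = c"
proof -
  have d: "DERIV (\<lambda>t. R * t powr a - c * t) 1 :> R * (a * 1 powr (a - 1)) - c * 1"
    by (auto intro!: derivative_eq_intros)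
  have "R * (a * 1 powr (a - 1)) - c * 1 = 0"
    apply (rule DERIV_local_max[OF d, of "1/2"])
    using assms by (auto simp: abs_if split: if_splits)
  then show ?thesis by simp
qed

lemma mv_comp:
  "((mat 1 - ((\<chi> i j. A i j)::real^'m::finite^'m)) *v x)$i = x$i - (\<Sum>j\<in>UNIV. A i j * x$j)"
  by (simp only: matrix_vector_mult_diff_rdistrib matrix_vector_mul_lid vector_minus_component) (simp add: matrix_vector_mult_def)

lemma derivtest:
  fixes aj ak xj xk c L0 :: real
  assumes "xj > 0" "xk > 0"
  shows "DERIV (\<lambda>t. L0 - aj * ln xj + aj * ln (t * xj) - ak * ln xk + ak * ln (xk + (1 - t) * c)) 1 :> aj - ak * c / xk"
  using assms by (auto intro!: derivative_eq_intros)

lemma inv_ok: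
  fixes A :: "'m::finite \<Rightarrow> 'm \<Rightarrow> real"
  assumes "\<forall>i j. A i j \<ge> 0" "\<forall>i. (\<Sum>j\<in>UNIV. A i j) < 1"
  shows "matrix_inv (mat 1 - (\<chi> i j. A i j)) ** (mat 1 - ((\<chi> i j. A i j)::real^'m^'m)) = mat 1"
proof -
  let ?M = "mat 1 - ((\<chi> i j. A i j)::real^'m^'m)"
  have ker: "\<forall>x. ?M *v x = 0 \<longrightarrow> x = 0"
  proof (intro allI impI)
    fix x :: "real^'m"
    assume h: "?M *v x = 0"
    have "Max (range (\<lambda>j. \<bar>x$j\<bar>)) \<in> range (\<lambda>j. \<bar>x$j\<bar>)" by (rule Max_in) auto
    then obtain i where ieq0: "Max (range (\<lambda>j. \<bar>x$j\<bar>)) = \<bar>x$i\<bar>" by blast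
    note ieq = ieq0[symmetric]
    have im: "\<forall>j. \<bar>x$j\<bar> \<le> \<bar>x$i\<bar>" unfolding ieq by (intro allI Max_ge) auto
    have comp: "x$i = (\<Sum>j\<in>UNIV. A i j * x$j)"
      using arg_cong[OF h, of "\<lambda>v. v$i"] unfolding mv_comp by simp
    have "\<bar>x$i\<bar> \<le> (\<Sum>j\<in>UNIV. A i j * \<bar>x$i\<bar>)"
    proof -
      have "\<bar>x$i\<bar> \<le> (\<Sum>j\<in>UNIV. \<bar>A i j * x$j\<bar>)" unfolding comp by (rule sum_abs)
      also have "\<dots> \<le> (\<Sum>j\<in>UNIV. A i j * \<bar>x$i\<bar>)"
        apply (rule sum_mono) using assms(1) im by (simp add: abs_mult mult_left_mono)
      finally show ?thesis .
    qed
    also have "\<dots> = (\<Sum>j\<in>UNIV. A i j) * \<bar>x$i\<bar>" by (simp add: sum_distrib_right)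
    finally have "(1 - (\<Sum>j\<in>UNIV. A i j)) * \<bar>x$i\<bar> \<le> 0" by (simp add: algebra_simps)
    moreover have "1 - (\<Sum>j\<in>UNIV. A i j) > 0" using assms(2) by simp
    ultimately have "\<bar>x$i\<bar> = 0"
      by (metis abs_ge_zero antisym mult_le_0_iff not_less)
    then show "x = 0" using im by (simp add: vec_eq_iff)
  qed
  then have "invertible ?M"
    using matrix_left_invertible_ker invertible_left_inverse by blast
  then have "\<exists>A'. ?M ** A' = mat 1 \<and> A' ** ?M = mat 1" unfolding invertible_def .
  then show ?thesis unfolding matrix_inv_def by (rule someI2_ex) auto
qed

theorem mainTheorem3:
  fixes lam :: "'m::finite \<Rightarrow> real"
    and alab :: "'m \<Rightarrow> real"
    and A :: "'m \<Rightarrow> 'm \<Rightarrow> real"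
    and a0 :: "'m \<Rightarrow> real"
    and sec :: "'m \<Rightarrow> nat"
    and w :: real and p x0 lab y :: "'m \<Rightarrow> real" and X :: "'m \<Rightarrow> 'm \<Rightarrow> real"
  assumes lam_pos: "\<forall>i. lam i > 0"
    and A_nonneg: "\<forall>i j. A i j \<ge> 0"
    and alab_nonneg: "\<forall>i. alab i \<ge> 0"
    and sec_nz: "\<forall>j. sec j \<noteq> 0"
    and req_sum: "\<forall>i. alab i + (\<Sum>j\<in>UNIV. A i j) \<le> 1"
    and a0_pos: "\<forall>j. a0 j > 0"
    and a0_sum: "(\<Sum>j\<in>UNIV. a0 j) = 1"
    and lab_req_pos: "\<forall>i. req sec alab A i 0 > 0"
    and nonlab_req: "\<exists>i s. s \<noteq> 0 \<and> req sec alab A i s > 0"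
    and norm: "w = 1"
    and eq: "equilibrium lam alab A a0 w p x0 lab X y"
  shows "let v = (\<lambda>i. p i * y i);
             eps = (\<lambda>i. 1 - (alab i + (\<Sum>j\<in>UNIV. A i j)));
             v0 = 1 + (\<Sum>i\<in>UNIV. eps i * v i);
             Am = (\<chi> i j. A i j) :: real^'m^'m;
             a0v = (\<chi> i. a0 i) :: real^'m;
             uv = (\<chi> i. ln (lam i) + xlogx (alab i) + (\<Sum>j\<in>UNIV. xlogx (A i j))) :: real^'m;
             Dlogv = (\<chi> i. (alab i + (\<Sum>j\<in>UNIV. A i j) - 1) * ln (v i)) :: real^'m;
             Linv = matrix_inv (mat 1 - Am)
         in w * 1 + (\<Sum>i\<in>UNIV. profit lam alab A w p i (lab i) (X i)) = v0 \<and>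
            ln (util a0 x0) = ln v0 + (\<Sum>i\<in>UNIV. a0 i * ln (a0 i))
              + a0v \<bullet> (Linv *v uv) + a0v \<bullet> (Linv *v Dlogv)"
proof -
  have alab_pos: "\<forall>i. alab i > 0" using lab_req_pos by (simp add: req_def)
  have w1: "w = 1" by (rule norm)
  define P where "P i = profit lam alab A w p i (lab i) (X i)" for i
  define I where "I = w * 1 + (\<Sum>i\<in>UNIV. P i)"
  define L where "L x = (\<Sum>j\<in>UNIV. a0 j * ln (x j))" for x :: "'m \<Rightarrow> real"
  have p_nn: "\<forall>j. p j \<ge> 0" using eq unfolding equilibrium_def by blast
  have firm: "\<forall>i. lab i \<ge> 0 \<and> (\<forall>j. X i j \<ge> 0) \<and>
          y i = prod_fun lam alab A i (lab i) (X i) \<and>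
          (\<forall>l z. l \<ge> 0 \<longrightarrow> (\<forall>j. z j \<ge> 0) \<longrightarrow>
               profit lam alab A w p i l z \<le> profit lam alab A w p i (lab i) (X i))"
    using eq unfolding equilibrium_def by blast
  have hh: "(\<forall>j. x0 j \<ge> 0) \<and> (\<Sum>j\<in>UNIV. p j * x0 j) \<le> I \<and>
        (\<forall>x. (\<forall>j. x j \<ge> 0) \<longrightarrow> (\<Sum>j\<in>UNIV. p j * x j) \<le> I \<longrightarrow>
              util a0 x \<le> util a0 x0)"
    using eq unfolding equilibrium_def Let_def I_def P_def by blast
  have clear: "\<forall>j. y j = x0 j + (\<Sum>i\<in>UNIV. X i j)"
    using eq unfolding equilibrium_def by blast
  have x0_nn: "\<And>j. x0 j \<ge> 0" and budget: "(\<Sum>j\<in>UNIV. p j * x0 j) \<le> I"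
    and opt: "\<And>x. (\<forall>j. x j \<ge> 0) \<Longrightarrow> (\<Sum>j\<in>UNIV. p j * x j) \<le> I \<Longrightarrow> util a0 x \<le> util a0 x0"
    using hh by auto
  have P_nn: "P i \<ge> 0" for i
  proof -
    have "profit lam alab A w p i 0 (\<lambda>_. 0) \<le> P i"
      unfolding P_def using firm by auto
    moreover have "profit lam alab A w p i 0 (\<lambda>_. 0) = 0"
      using alab_pos by (simp add: profit_def prod_fun_def cdp_zero)
    ultimately show ?thesis by simp
  qed
  have I_ge: "I \<ge> 1" unfolding I_def w1 using P_nn by (simp add: sum_nonneg)
  have Lexp: "\<And>x. (\<forall>j. x j > 0) \<Longrightarrow> util a0 x = exp (L x)"
    unfolding L_def by (rule util_exp)
  have util_x0_pos: "util a0 x0 > 0"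
  proof -
    define n where "n = real CARD('m)"
    have n_pos: "n > 0" unfolding n_def by simp
    define xx where "xx j = I / (n * (p j + 1))" for j
    have xx_pos: "\<forall>j. xx j > 0" using I_ge n_pos p_nn unfolding xx_def
      by (smt (verit) divide_pos_pos mult_pos_pos)
    have pw: "p j * xx j \<le> I / n" for j
    proof -
      have "p j * xx j = (p j / (p j + 1)) * (I / n)" unfolding xx_def
        using p_nn[rule_format, of j] by (simp add: field_simps)
      also have "\<dots> \<le> 1 * (I / n)"
        apply (rule mult_right_mono) using p_nn[rule_format, of j] I_ge n_pos by auto
      finally show "p j * xx j \<le> I / n" by simp
    qed
    have "(\<Sum>j\<in>UNIV. p j * xx j) \<le> (\<Sum>j\<in>(UNIV::'m set). I / n)"
      using pw by (simp add: sum_mono del: sum_constant)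
    also have "\<dots> = I" using n_pos unfolding n_def by simp
    finally have "util a0 xx \<le> util a0 x0" using opt xx_pos by (simp add: less_imp_le)
    moreover have "util a0 xx > 0" unfolding util_def using xx_pos
      by (intro prod_pos) (simp add: cdp_pos)
    ultimately show ?thesis by simp
  qed
  have x0_pos: "\<And>j. x0 j > 0"
  proof (rule ccontr)
    fix j assume "\<not> x0 j > 0"
    then have "x0 j = 0" using x0_nn[of j] by simp
    then have "cdp (x0 j) (a0 j) = 0" using a0_pos cdp_zero by simp
    then have "util a0 x0 = 0" unfolding util_def by (simp add: prod_zero_iff) blast
    then show False using util_x0_pos by simp
  qed
  have upd_sum: "(\<Sum>k\<in>UNIV. g k * h ((x(j:=c)) k)) = (\<Sum>k\<in>UNIV. g k * h (x k)) - g j * h (x j) + g j * h c"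
    for g :: "'m \<Rightarrow> real" and h :: "real \<Rightarrow> real" and x :: "'m \<Rightarrow> real" and j c
    by (rule sum_upd[of "\<lambda>k v. g k * h v"])
  have ex_j: "\<exists>j::'m. True" by simp
  have p_pos: "\<And>j. p j > 0"
  proof (rule ccontr)
    fix j assume "\<not> p j > 0"
    then have pj: "p j = 0" using p_nn[rule_format, of j] by simp
    define x' where "x' = x0(j := 2 * x0 j)"
    have x'pos: "\<forall>k. x' k > 0" unfolding x'_def using x0_pos by simp
    have "(\<Sum>k\<in>UNIV. p k * x' k) = (\<Sum>k\<in>UNIV. p k * x0 k)"
      unfolding x'_def using upd_sum[of p "\<lambda>v. v" x0 j "2 * x0 j"] pj by simp
    then have "util a0 x' \<le> util a0 x0" using opt x'pos budget by (simp add: less_imp_le)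
    then have "L x' \<le> L x0" using Lexp x'pos x0_pos by simp
    moreover have "L x' = L x0 - a0 j * ln (x0 j) + a0 j * ln (2 * x0 j)"
      unfolding x'_def L_def by (rule upd_sum)
    moreover have "ln (2 * x0 j) = ln 2 + ln (x0 j)" using x0_pos[of j] by (simp add: ln_mult)
    moreover have "a0 j * ln 2 > 0" using a0_pos by simp
    ultimately show False by (simp add: algebra_simps)
  qed
  define S where "S = (\<Sum>j\<in>UNIV. p j * x0 j)"
  have S_eq: "S = I"
  proof (rule ccontr)
    assume "S \<noteq> I"
    then have SI: "S < I" using budget S_def by simp
    obtain j :: 'm where True by simp
    define x' where "x' = x0(j := x0 j + (I - S) / p j)"
    have inc: "x0 j + (I - S) / p j > x0 j" using SI p_pos[of j] by simp
    have x'pos: "\<forall>k. x' k > 0" unfolding x'_def using x0_pos inc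
      by (smt (verit) fun_upd_apply)
    have "(\<Sum>k\<in>UNIV. p k * x' k) = S - p j * x0 j + p j * (x0 j + (I - S) / p j)"
      unfolding x'_def S_def using upd_sum[of p "\<lambda>v. v" x0 j] by simp
    also have "\<dots> = I" using p_pos[of j] by (simp add: field_simps)
    finally have "util a0 x' \<le> util a0 x0" using opt x'pos by (simp add: less_imp_le)
    then have "L x' \<le> L x0" using Lexp x'pos x0_pos by simp
    moreover have "L x' = L x0 - a0 j * ln (x0 j) + a0 j * ln (x0 j + (I - S) / p j)"
      unfolding x'_def L_def by (rule upd_sum)
    moreover have "ln (x0 j + (I - S) / p j) > ln (x0 j)" using inc x0_pos[of j] by simp
    ultimately show False using a0_pos[rule_format, of j]
      by (smt (verit) mult_strict_left_mono)
  qed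
  have pair: "a0 j * (p k * x0 k) = a0 k * (p j * x0 j)" if jk: "j \<noteq> k" for j k
  proof -
    define c where "c = p j * x0 j / p k"
    have c_pos: "c > 0" unfolding c_def using p_pos x0_pos by simp
    define d where "d = x0 k / (2 * (c + x0 k))"
    have d_pos: "d > 0" unfolding d_def using c_pos x0_pos[of k] by simp
    have d_le: "d \<le> 1/2" unfolding d_def using c_pos x0_pos[of k] by (simp add: field_simps)
    have dc: "d * c < x0 k" unfolding d_def using c_pos x0_pos[of k] by (simp add: field_simps) (smt (verit) mult_pos_pos)
    define G where "G t = L x0 - a0 j * ln (x0 j) + a0 j * ln (t * x0 j) - a0 k * ln (x0 k) + a0 k * ln (x0 k + (1 - t) * c)" for t
    have der: "DERIV G 1 :> a0 j - a0 k * c / x0 k"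
      unfolding G_def using derivtest[OF x0_pos[of j] x0_pos[of k]] by simp
    have "a0 j - a0 k * c / x0 k = 0"
    proof (rule DERIV_local_max[OF der d_pos], intro allI impI)
      fix t assume td: "\<bar>1 - t\<bar> < d"
      have t_pos: "t > 0" using td d_le by auto
      have k_pos: "x0 k + (1 - t) * c > 0"
      proof -
        have "\<bar>(1 - t) * c\<bar> \<le> d * c" using td c_pos by (simp add: abs_mult mult_right_mono less_imp_le)
        then show ?thesis using dc by linarith
      qed
      define x' where "x' = x0(j := t * x0 j, k := x0 k + (1 - t) * c)"
      have x'pos: "\<forall>i. x' i > 0" unfolding x'_def using x0_pos t_pos k_pos by simp
      have "(\<Sum>i\<in>UNIV. p i * x' i) = S - p j * x0 j + p j * (t * x0 j) - p k * x0 k + p k * (x0 k + (1 - t) * c)"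
        unfolding x'_def S_def using upd_sum[of p "\<lambda>v. v" "x0(j := t * x0 j)" k] upd_sum[of p "\<lambda>v. v" x0 j] jk by simp
      also have "\<dots> = S" unfolding c_def using p_pos[of k] by (simp add: field_simps)
      finally have "util a0 x' \<le> util a0 x0" using opt x'pos S_eq by (simp add: less_imp_le)
      then have "L x' \<le> L x0" using Lexp x'pos x0_pos by simp
      moreover have "L x' = G t"
        unfolding x'_def L_def G_def using upd_sum[of a0 ln "x0(j := t * x0 j)" k] upd_sum[of a0 ln x0 j] jk by simp
      moreover have "G 1 = L x0" unfolding G_def by simp
      ultimately show "G t \<le> G 1" by simp
    qed
    then show ?thesis unfolding c_def using p_pos[of k] x0_pos[of k] by (simp add: field_simps)
  qed
  have demand: "p j * x0 j = a0 j * I" for j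
  proof -
    define K where "K = p j * x0 j / a0 j"
    have aj: "a0 j \<noteq> 0" using a0_pos by (metis less_irrefl)
    have pk: "p k * x0 k = a0 k * K" for k
    proof -
      have e: "a0 j * (p k * x0 k) = a0 k * (p j * x0 j)" by (cases "j = k") (simp_all add: pair)
      then show ?thesis unfolding K_def using aj by (simp add: field_simps)
    qed
    have "S = (\<Sum>k\<in>UNIV. a0 k) * K" unfolding S_def pk
      by (simp add: sum_distrib_right)
    then have "K = I" using S_eq a0_sum by simp
    then show ?thesis unfolding K_def using aj by (simp add: field_simps)
  qed
  define v where "v = (\<lambda>i. p i * y i)"
  define Pi where "Pi i = (\<Prod>k\<in>UNIV. cdp (X i k) (A i k))" for i
  have y_eq: "y i = lam i * cdp (lab i) (alab i) * Pi i" for i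
    using firm unfolding prod_fun_def Pi_def by blast
  have lab_nn: "lab i \<ge> 0" for i using firm by blast
  have X_nn: "X i j \<ge> 0" for i j using firm by blast
  have fopt: "\<And>l z. l \<ge> 0 \<Longrightarrow> (\<forall>j. z j \<ge> 0) \<Longrightarrow>
               profit lam alab A w p i l z \<le> profit lam alab A w p i (lab i) (X i)" for i
    using firm by blast
  have y_pos: "y i > 0" for i
  proof -
    have "(\<Sum>k\<in>UNIV. X k i) \<ge> 0" using X_nn by (simp add: sum_nonneg)
    then show ?thesis using clear x0_pos[of i] by (metis add_pos_nonneg)
  qed
  have v_pos: "v i > 0" for i unfolding v_def using p_pos y_pos by simp
  have lab_pos: "lab i > 0" for i
  proof (rule ccontr)
    assume "\<not> lab i > 0"
    then have "lab i = 0" using lab_nn[of i] by simp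
    then have "y i = 0" using y_eq[of i] alab_pos cdp_zero by simp
    then show False using y_pos[of i] by simp
  qed
  have X_pos: "A i j > 0 \<Longrightarrow> X i j > 0" for i j
  proof (rule ccontr)
    assume a: "A i j > 0" "\<not> X i j > 0"
    then have "X i j = 0" using X_nn[of i j] by simp
    then have "cdp (X i j) (A i j) = 0" using a cdp_zero by simp
    then have "Pi i = 0" unfolding Pi_def by (simp add: prod_zero_iff) blast
    then show False using y_eq[of i] y_pos[of i] by simp
  qed
  have cdpX_pos: "cdp (X i k) (A i k) > 0" for i k
  proof (cases "A i k = 0")
    case True then show ?thesis by (simp add: cdp_def)
  next
    case False
    then have "A i k > 0" using A_nonneg by (metis le_less)
    then show ?thesis using X_pos[of i k] cdp_pos by blast
  qed
  have Pi_pos: "Pi i > 0" for i unfolding Pi_def using cdpX_pos by (simp add: prod_pos)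
  define C where "C i = (\<Sum>j\<in>UNIV. p j * X i j)" for i
  have prof_eq: "profit lam alab A w p i l z = p i * prod_fun lam alab A i l z - l - (\<Sum>j\<in>UNIV. p j * z j)" for i l z
    unfolding profit_def w1 by simp
  have foc_lab: "v i * alab i = lab i" for i
  proof (rule foc_scale)
    fix t :: real assume t: "t > 0"
    have "prod_fun lam alab A i (t * lab i) (X i) = t powr alab i * y i"
      unfolding prod_fun_def y_eq Pi_def using cdp_scale[OF lab_pos[of i] t] by simp
    moreover have "profit lam alab A w p i (t * lab i) (X i) \<le> profit lam alab A w p i (lab i) (X i)"
      using fopt[of "t * lab i" "X i" i] t lab_nn[of i] X_nn by simp
    moreover have "prod_fun lam alab A i (lab i) (X i) = y i" unfolding prod_fun_def y_eq Pi_def by simp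
    ultimately show "v i * t powr alab i - lab i * t \<le> v i - lab i"
      unfolding prof_eq v_def by (simp add: algebra_simps)
  qed
  have foc_X: "v i * A i j = p j * X i j" for i j
  proof (cases "X i j > 0")
    case False
    then have "A i j = 0" using X_pos[of i j] A_nonneg[rule_format, of i j] by linarith
    moreover have "X i j = 0" using False X_nn[of i j] by simp
    ultimately show ?thesis by simp
  next
    case True
    show ?thesis
    proof (rule foc_scale)
      fix t :: real assume t: "t > 0"
      have "Pi i = cdp (X i j) (A i j) * (\<Prod>k\<in>UNIV-{j}. cdp (X i k) (A i k))"
        unfolding Pi_def by (rule prod_upd(2))
      moreover have "(\<Prod>k\<in>UNIV. cdp (((X i)(j := t * X i j)) k) (A i k)) = cdp (t * X i j) (A i j) * (\<Prod>k\<in>UNIV-{j}. cdp (X i k) (A i k))"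
        by (rule prod_upd(1))
      ultimately have "prod_fun lam alab A i (lab i) ((X i)(j := t * X i j)) = t powr A i j * y i"
        unfolding prod_fun_def y_eq using cdp_scale[OF True t] by simp
      moreover have "profit lam alab A w p i (lab i) ((X i)(j := t * X i j)) \<le> profit lam alab A w p i (lab i) (X i)"
        using fopt[of "lab i" "(X i)(j := t * X i j)" i] t lab_nn[of i] X_nn by simp
      moreover have "prod_fun lam alab A i (lab i) (X i) = y i" unfolding prod_fun_def y_eq Pi_def by simp
      moreover have "(\<Sum>k\<in>UNIV. p k * ((X i)(j := t * X i j)) k) = C i - p j * X i j + p j * (t * X i j)"
        unfolding C_def using upd_sum[of p "\<lambda>v. v" "X i" j] by simp
      ultimately show "v i * t powr A i j - p j * X i j * t \<le> v i - p j * X i j"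
        unfolding prof_eq v_def C_def by (simp add: algebra_simps)
    qed
  qed
  define eps where "eps i = 1 - (alab i + (\<Sum>j\<in>UNIV. A i j))" for i
  define v0 where "v0 = 1 + (\<Sum>i\<in>UNIV. eps i * v i)"
  have P_eq: "P i = eps i * v i" for i
  proof -
    have py: "prod_fun lam alab A i (lab i) (X i) = y i" unfolding prod_fun_def y_eq Pi_def by simp
    have "P i = v i - lab i - (\<Sum>j\<in>UNIV. v i * A i j)"
      unfolding P_def prof_eq py foc_X by (simp add: v_def)
    also have "\<dots> = eps i * v i" unfolding eps_def foc_lab[symmetric]
      by (simp add: algebra_simps sum_distrib_left)
    finally show ?thesis .
  qed
  have I_v0: "I = v0" unfolding I_def v0_def w1 P_eq by simp
  define Am where "Am = ((\<chi> i j. A i j) :: real^'m^'m)"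
  define a0v where "a0v = ((\<chi> i. a0 i) :: real^'m)"
  define uv where "uv = ((\<chi> i. ln (lam i) + xlogx (alab i) + (\<Sum>j\<in>UNIV. xlogx (A i j))) :: real^'m)"
  define Dlogv where "Dlogv = ((\<chi> i. (alab i + (\<Sum>j\<in>UNIV. A i j) - 1) * ln (v i)) :: real^'m)"
  define Linv where "Linv = matrix_inv (mat 1 - Am)"
  define nlp where "nlp = ((\<chi> i. - ln (p i)) :: real^'m)"
  have lnX: "A i j * ln (X i j) = xlogx (A i j) + A i j * ln (v i) - A i j * ln (p j)" for i j
  proof (cases "A i j = 0")
    case True then show ?thesis by (simp add: xlogx_def)
  next
    case False
    then have Ap: "A i j > 0" using A_nonneg by (metis le_less)
    have "X i j = v i * A i j / p j" using foc_X[of i j] p_pos[of j] by (simp add: field_simps)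
    then have "ln (X i j) = ln (v i) + ln (A i j) - ln (p j)"
      using v_pos[of i] Ap p_pos[of j] by (simp add: ln_div ln_mult)
    then have "A i j * ln (X i j) = A i j * (ln (v i) + ln (A i j) - ln (p j))" by simp
    then show ?thesis using False by (simp add: xlogx_def algebra_simps)
  qed
  have lnlab: "alab i * ln (lab i) = xlogx (alab i) + alab i * ln (v i)" for i
  proof -
    have "lab i = v i * alab i" using foc_lab[of i] by simp
    then have "ln (lab i) = ln (v i) + ln (alab i)" using v_pos[of i] alab_pos[rule_format, of i] by (simp add: ln_mult)
    then show ?thesis using alab_pos[rule_format, of i] by (simp add: xlogx_def algebra_simps)
  qed
  have lny: "ln (y i) = uv$i + (alab i + (\<Sum>j\<in>UNIV. A i j)) * ln (v i) - (\<Sum>j\<in>UNIV. A i j * ln (p j))" for i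
  proof -
    have "ln (y i) = ln (lam i) + ln (cdp (lab i) (alab i)) + ln (Pi i)"
      unfolding y_eq using lam_pos[rule_format, of i] cdp_pos[OF lab_pos[of i], of "alab i"] Pi_pos[of i]
      by (simp add: ln_mult)
    also have "ln (Pi i) = (\<Sum>k\<in>UNIV. ln (cdp (X i k) (A i k)))"
      unfolding Pi_def using cdpX_pos by (intro ln_prod) (auto simp: less_imp_neq[symmetric])
    also have "\<dots> = (\<Sum>k\<in>UNIV. A i k * ln (X i k))"
      by (rule sum.cong[OF refl], rule ln_cdp) (use X_pos A_nonneg in \<open>metis le_less\<close>)
    also have "\<dots> = (\<Sum>k\<in>UNIV. xlogx (A i k)) + (\<Sum>k\<in>UNIV. A i k) * ln (v i) - (\<Sum>k\<in>UNIV. A i k * ln (p k))"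
      unfolding lnX by (simp add: sum.distrib sum_subtractf sum_distrib_right)
    also have "ln (cdp (lab i) (alab i)) = alab i * ln (lab i)" using lab_pos[of i] by (simp add: ln_cdp)
    finally show ?thesis unfolding lnlab uv_def by (simp add: algebra_simps)
  qed
  have Mnlp: "(mat 1 - Am) *v nlp = uv + Dlogv"
  proof (subst vec_eq_iff, intro allI)
    fix i
    have lnp: "ln (p i) = ln (v i) - ln (y i)" unfolding v_def using p_pos[of i] y_pos[of i] by (simp add: ln_mult)
    show "((mat 1 - Am) *v nlp) $ i = (uv + Dlogv) $ i"
      unfolding Am_def mv_comp nlp_def Dlogv_def using lnp lny[of i]
      by (simp add: sum_negf algebra_simps)
  qed
  have LM: "Linv ** (mat 1 - Am) = mat 1" unfolding Linv_def Am_def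
  proof (rule inv_ok)
    show "\<forall>i j. A i j \<ge> 0" by (rule A_nonneg)
    show "\<forall>i. (\<Sum>j\<in>UNIV. A i j) < 1" using req_sum alab_pos by (smt (verit))
  qed
  have nlp_eq: "nlp = Linv *v uv + Linv *v Dlogv"
  proof -
    have "nlp = Linv *v ((mat 1 - Am) *v nlp)" by (simp add: matrix_vector_mul_assoc LM)
    then show ?thesis unfolding Mnlp by (simp add: matrix_vector_right_distrib)
  qed
  have F2: "ln (util a0 x0) = ln v0 + (\<Sum>i\<in>UNIV. a0 i * ln (a0 i)) + a0v \<bullet> (Linv *v uv) + a0v \<bullet> (Linv *v Dlogv)"
  proof -
    have "ln (util a0 x0) = L x0" using Lexp x0_pos by simp
    also have "\<dots> = (\<Sum>j\<in>UNIV. a0 j * ln (a0 j) + a0 j * ln v0 + a0 j * nlp$j)"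
      unfolding L_def
    proof (rule sum.cong[OF refl])
      fix j
      have "x0 j = a0 j * v0 / p j" using demand[of j] I_v0 p_pos[of j] by (simp add: field_simps)
      then have "ln (x0 j) = ln (a0 j) + ln v0 - ln (p j)"
        using a0_pos[rule_format, of j] I_v0 I_ge p_pos[of j] by (simp add: ln_div ln_mult)
      then show "a0 j * ln (x0 j) = a0 j * ln (a0 j) + a0 j * ln v0 + a0 j * nlp$j"
        unfolding nlp_def by (simp add: distrib_left right_diff_distrib)
    qed
    also have "\<dots> = (\<Sum>j\<in>UNIV. a0 j * ln (a0 j)) + ln v0 + a0v \<bullet> nlp"
      unfolding a0v_def using a0_sum by (simp add: sum.distrib inner_vec_def sum_distrib_right[symmetric])
    finally show ?thesis unfolding nlp_eq by (simp add: inner_add_right)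
  qed
  have F1: "w * 1 + (\<Sum>i\<in>UNIV. profit lam alab A w p i (lab i) (X i)) = v0"
    using I_v0 unfolding I_def P_def .
  show ?thesis
    using F1 F2 unfolding Let_def v0_def eps_def v_def a0v_def uv_def Dlogv_def Linv_def Am_def
    by blast
qed

end
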